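(* Let $T\in K\{X\}_\infty$ be a monomial. Then $$\Delta_a(T)=\sum_{I\subseteq\mathrm{Le}(T)}\mathrm{red}(T|I)\otimes\mathrm{red}(T|I^c),$$ where $I^c=\mathrm{Le}(T)\setminus I$. The same formula holds for the restriction of $\Delta_a$ to $K\{X\}$ and $T\in K\{X\}$ a monomial.
   Context: $K$ is a field of characteristic $0$ and $X=\{x_1,x_2,\dots\}$ a finite or countable set of variables. A planar rooted tree is reduced if no vertex has exactly one incoming edge. $K\{X\}_\infty$ has basis the monomials: the empty tree $1$ and all planar reduced rooted trees with leaves labelled by elements of $X$; for $k\ge2$, $\vee^k$ grafts $k$ nonempty trees (in order) onto a new root, extended multilinearly, with unit conventions (arguments $1$ omitted, $\vee^1=\mathrm{id}$, $\vee^k(1,\dots,1)=1$). $K\{X\}$ is the span of $1$ and the binary trees. $K\{X\}_\infty\otimes K\{X\}_\infty$ carries the operations componentwise ($\vee^k(a_1\otimes b_1,\dots,a_k\otimes b_k)=\vee^k(a_1,\dots,a_k)\otimes\vee^k(b_1,\dots,b_k)$), and $\Delta_a$ is the unique unital homomorphism for the $\vee^k$ with $\Delta_a(x_i)=x_i\otimes1+1\otimes x_i$. $\mathrm{Le}(T)$ is the set of leaves of $T$. For $I\subseteq\mathrm{Le}(T)$, the leaf-restriction $T|I$ is obtained from $T$ by deleting every vertex whose full subtree (the vertex and all its descendants) contains no leaf of $I$ (it is the empty tree $1$ if $I=\emptyset$); the reduction $\mathrm{red}(S)$ of a labelled tree $S$ is obtained by deleting all vertices with exactly one child, the remaining vertices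 keeping their labels and the descendant relation (so $v'$ is a descendant of $v$ in $\mathrm{red}(S)$ iff it is in $S$), and keeping the planar order. *)

theory Defs
  imports "HOL-Library.Poly_Mapping" "HOL-Library.Countable"
begin

datatype 'x tree = Leaf 'x | Node "'x tree list"

text \<open>Monomials: None is the empty tree 1, Some t a nonempty tree.\<close>
type_synonym 'x mon = "'x tree option"

fun reduced :: "'x tree \<Rightarrow> bool" where
  "reduced (Leaf x) = True"
| "reduced (Node ts) = (2 \<le> length ts \<and> (\<forall>t\<in>set ts. reduced t))"

fun binary :: "'x tree \<Rightarrow> bool" where
  "binary (Leaf x) = True"
| "binary (Node ts) = (length ts = 2 \<and> (\<forall>t\<in>set ts. binary t))"

definition is_mon_inf :: "'x mon \<Rightarrow> bool" where
  "is_mon_inf m = (case m of None \<Rightarrow> True | Some t \<Rightarrow> reduced t)"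

definition is_mon_bin :: "'x mon \<Rightarrow> bool" where
  "is_mon_bin m = (case m of None \<Rightarrow> True | Some t \<Rightarrow> binary t)"

text \<open>Vectors are finitely supported coefficient functions on monomials;
 the tensor square has basis the pairs of monomials.\<close>

definition Kinf :: "('x mon \<Rightarrow>\<^sub>0 'k::field) set" where
  "Kinf = {v. \<forall>m\<in>Poly_Mapping.keys v. is_mon_inf m}"

definition Kbin :: "('x mon \<Rightarrow>\<^sub>0 'k::field) set" where
  "Kbin = {v. \<forall>m\<in>Poly_Mapping.keys v. is_mon_bin m}"

definition smul :: "'k::field \<Rightarrow> ('a \<Rightarrow>\<^sub>0 'k) \<Rightarrow> ('a \<Rightarrow>\<^sub>0 'k)" where
  "smul c v = Poly_Mapping.map (\<lambda>y. c * y) v"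

definition one_v :: "'x mon \<Rightarrow>\<^sub>0 'k::field" where
  "one_v = Poly_Mapping.single None 1"

definition one_t :: "('x mon \<times> 'x mon) \<Rightarrow>\<^sub>0 'k::field" where
  "one_t = Poly_Mapping.single (None, None) 1"

definition var_v :: "'x \<Rightarrow> 'x mon \<Rightarrow>\<^sub>0 'k::field" where
  "var_v x = Poly_Mapping.single (Some (Leaf x)) 1"

definition prim_t :: "'x \<Rightarrow> ('x mon \<times> 'x mon) \<Rightarrow>\<^sub>0 'k::field" where
  "prim_t x = Poly_Mapping.single (Some (Leaf x), None) 1
            + Poly_Mapping.single (None, Some (Leaf x)) 1"

text \<open>Grafting of monomials with the unit conventions: arguments 1 are omitted,
 grafting a single tree is the identity, grafting only 1's gives 1.\<close>
definition graft :: "'x mon list \<Rightarrow> 'x mon" where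
  "graft ms = (let ts = [t. Some t \<leftarrow> ms] in
     (case ts of [] \<Rightarrow> None | [t] \<Rightarrow> Some t | _ \<Rightarrow> Some (Node ts)))"

definition multilin :: "('a list \<Rightarrow> 'b) \<Rightarrow> ('a \<Rightarrow>\<^sub>0 'k::field) list \<Rightarrow> ('b \<Rightarrow>\<^sub>0 'k)" where
  "multilin f vs = (\<Sum>ms\<in>listset (map Poly_Mapping.keys vs).
      Poly_Mapping.single (f ms) (prod_list (map2 Poly_Mapping.lookup vs ms)))"

definition vee :: "('x mon \<Rightarrow>\<^sub>0 'k::field) list \<Rightarrow> ('x mon \<Rightarrow>\<^sub>0 'k)" where
  "vee vs = multilin graft vs"

definition vee_t :: "(('x mon \<times> 'x mon) \<Rightarrow>\<^sub>0 'k::field) list \<Rightarrow> (('x mon \<times> 'x mon) \<Rightarrow>\<^sub>0 'k)" where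
  "vee_t vs = multilin (\<lambda>ps. (graft (map fst ps), graft (map snd ps))) vs"

definition is_Delta_inf :: "(('x mon \<Rightarrow>\<^sub>0 'k::field) \<Rightarrow> (('x mon \<times> 'x mon) \<Rightarrow>\<^sub>0 'k)) \<Rightarrow> bool" where
  "is_Delta_inf D \<longleftrightarrow>
     (\<forall>a\<in>Kinf. \<forall>b\<in>Kinf. D (a + b) = D a + D b) \<and>
     (\<forall>c. \<forall>a\<in>Kinf. D (smul c a) = smul c (D a)) \<and>
     D one_v = one_t \<and>
     (\<forall>x. D (var_v x) = prim_t x) \<and>
     (\<forall>vs. 2 \<le> length vs \<longrightarrow> set vs \<subseteq> Kinf \<longrightarrow> D (vee vs) = vee_t (map D vs))"

definition is_Delta_bin :: "(('x mon \<Rightarrow>\<^sub>0 'k::field) \<Rightarrow> (('x mon \<times> 'x mon) \<Rightarrow>\<^sub>0 'k)) \<Rightarrow> bool" where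
  "is_Delta_bin D \<longleftrightarrow>
     (\<forall>a\<in>Kbin. \<forall>b\<in>Kbin. D (a + b) = D a + D b) \<and>
     (\<forall>c. \<forall>a\<in>Kbin. D (smul c a) = smul c (D a)) \<and>
     D one_v = one_t \<and>
     (\<forall>x. D (var_v x) = prim_t x) \<and>
     (\<forall>a\<in>Kbin. \<forall>b\<in>Kbin. D (vee [a, b]) = vee_t [D a, D b])"

text \<open>Leaves are identified by their paths (lists of child indices) from the root.\<close>
fun leaves :: "'x tree \<Rightarrow> nat list set"
and leavess :: "nat \<Rightarrow> 'x tree list \<Rightarrow> nat list set" where
  "leaves (Leaf x) = {[]}"
| "leaves (Node ts) = leavess 0 ts"
| "leavess i [] = {}"
| "leavess i (t # ts) = (Cons i) ` leaves t \<union> leavess (Suc i) ts"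

definition leaves_m :: "'x mon \<Rightarrow> nat list set" where
  "leaves_m m = (case m of None \<Rightarrow> {} | Some t \<Rightarrow> leaves t)"

text \<open>T|I: delete all vertices whose subtree contains no leaf of I (result None = empty tree).\<close>
fun restr :: "nat list set \<Rightarrow> 'x tree \<Rightarrow> 'x tree option"
and restrs :: "nat list set \<Rightarrow> nat \<Rightarrow> 'x tree list \<Rightarrow> 'x tree list" where
  "restr I (Leaf x) = (if [] \<in> I then Some (Leaf x) else None)"
| "restr I (Node ts) = (case restrs I 0 ts of [] \<Rightarrow> None | ts' \<Rightarrow> Some (Node ts'))"
| "restrs I i [] = []"
| "restrs I i (t # ts) =
     (case restr {p. i # p \<in> I} t of
        None \<Rightarrow> restrs I (Suc i) ts
      | Some t' \<Rightarrow> t' # restrs I (Suc i) ts)"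

definition restr_m :: "nat list set \<Rightarrow> 'x mon \<Rightarrow> 'x mon" where
  "restr_m I m = (case m of None \<Rightarrow> None | Some t \<Rightarrow> restr I t)"

fun red :: "'x tree \<Rightarrow> 'x tree" where
  "red (Leaf x) = Leaf x"
| "red (Node [t]) = red t"
| "red (Node ts) = Node (map red ts)"

definition red_m :: "'x mon \<Rightarrow> 'x mon" where
  "red_m m = map_option red m"

definition coprod_formula :: "'x mon \<Rightarrow> ('x mon \<times> 'x mon) \<Rightarrow>\<^sub>0 'k::field" where
  "coprod_formula T = (\<Sum>I\<in>Pow (leaves_m T).
      Poly_Mapping.single (red_m (restr_m I T), red_m (restr_m (leaves_m T - I) T)) 1)"

end

theory Submission
  imports Defs
begin

lemma finite_listset: "\<forall>A\<in>set As. finite A \<Longrightarrow> finite (listset As)"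
proof (induction As)
  case Nil then show ?case by simp
next
  case (Cons A As)
  have "set_Cons A (listset As) = (\<lambda>(a,l). a#l) ` (A \<times> listset As)"
    by (auto simp: set_Cons_def)
  then show ?case using Cons by simp
qed

lemma sum_set_Cons:
  assumes "finite A" "finite B"
  shows "(\<Sum>l\<in>set_Cons A B. F l) = (\<Sum>a\<in>A. \<Sum>l\<in>B. F (a#l))"
proof -
  have e: "set_Cons A B = (\<lambda>(a,l). a#l) ` (A \<times> B)"
    by (auto simp: set_Cons_def)
  have i: "inj_on (\<lambda>(a,l). a#l) (A \<times> B)" by (auto simp: inj_on_def)
  show ?thesis unfolding e sum.reindex[OF i] using assms
    by (auto simp: sum.cartesian_product intro!: sum.cong)
qed

lemma single_sum: "Poly_Mapping.single k (sum h S) = (\<Sum>x\<in>S. Poly_Mapping.single k (h x))"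
  by (induction S rule: infinite_finite_induct) (auto simp: single_add)

lemma multilin_gen:
  fixes g :: "'t \<Rightarrow> 'a \<Rightarrow> 'm" and A :: "'t \<Rightarrow> 'a set"
    and f :: "'m list \<Rightarrow> 'b" and c :: "'k::field_char_0"
  assumes fin: "\<And>t. finite (A t)"
  shows "(\<Sum>ms\<in>listset (map Poly_Mapping.keys (map (\<lambda>t. \<Sum>a\<in>A t. Poly_Mapping.single (g t a) (1::'k::field_char_0)) ts)).
      Poly_Mapping.single (f ms) (c * prod_list (map2 Poly_Mapping.lookup (map (\<lambda>t. \<Sum>a\<in>A t. Poly_Mapping.single (g t a) 1) ts) ms)))
    = (\<Sum>as\<in>listset (map A ts). Poly_Mapping.single (f (map2 g ts as)) c)"
proof (induction ts arbitrary: f c)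
  case Nil
  then show ?case by simp
next
  case (Cons t ts)
  define V where "V = (\<lambda>t. \<Sum>a\<in>A t. Poly_Mapping.single (g t a) (1::'k))"
  have finL: "finite (listset (map Poly_Mapping.keys (map V ts)))"
    by (intro finite_listset) auto
  have finR: "finite (listset (map A ts))"
    by (intro finite_listset) (auto simp: fin)
  have lk: "Poly_Mapping.lookup (V t) m = (\<Sum>a\<in>{a\<in>A t. g t a = m}. 1)" for m
    unfolding V_def Poly_Mapping.lookup_sum
    by (subst sum.inter_filter[OF fin]) (simp add: lookup_single when_def)
  have sub: "g t ` A t \<subseteq> Poly_Mapping.keys (V t)"
  proof
    fix m assume "m \<in> g t ` A t"
    then obtain a where a: "a \<in> A t" "g t a = m" by auto
    have "card {a\<in>A t. g t a = m} \<noteq> 0" using a fin[of t] by auto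
    then show "m \<in> Poly_Mapping.keys (V t)" unfolding in_keys_iff lk by simp
  qed
  define \<Phi> where "\<Phi> = (\<lambda>m. \<Sum>as\<in>listset (map A ts). Poly_Mapping.single (f (m # map2 g ts as)) c)"
  have "(\<Sum>ms\<in>listset (map Poly_Mapping.keys (map V (t#ts))).
      Poly_Mapping.single (f ms) (c * prod_list (map2 Poly_Mapping.lookup (map V (t#ts)) ms)))
     = (\<Sum>m\<in>Poly_Mapping.keys (V t). \<Sum>ms\<in>listset (map Poly_Mapping.keys (map V ts)).
      Poly_Mapping.single (f (m#ms)) ((c * Poly_Mapping.lookup (V t) m) * prod_list (map2 Poly_Mapping.lookup (map V ts) ms)))"
    by (simp only: list.map listset.simps, subst sum_set_Cons) (auto simp: finL[simplified] mult.assoc)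
  also have "\<dots> = (\<Sum>m\<in>Poly_Mapping.keys (V t). \<Sum>as\<in>listset (map A ts). Poly_Mapping.single (f (m # map2 g ts as)) (c * Poly_Mapping.lookup (V t) m))"
    using Cons.IH[of "\<lambda>ms. f (_ # ms)"] unfolding V_def by simp
  also have "\<dots> = (\<Sum>m\<in>Poly_Mapping.keys (V t). \<Sum>a\<in>{a\<in>A t. g t a = m}. \<Phi> (g t a))"
    unfolding lk sum_distrib_left single_sum \<Phi>_def
    by (intro sum.cong refl, subst sum.swap, simp)
  also have "\<dots> = (\<Sum>a\<in>A t. \<Phi> (g t a))"
    by (rule sum.group) (use sub fin in auto)
  also have "\<dots> = (\<Sum>as\<in>listset (map A (t#ts)). Poly_Mapping.single (f (map2 g (t#ts) as)) c)"
    by (simp add: sum_set_Cons finR fin \<Phi>_def)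
  finally show ?case unfolding V_def .
qed


lemma multilin_sum:
  fixes g :: "'t \<Rightarrow> 'a \<Rightarrow> 'm" and A :: "'t \<Rightarrow> 'a set"
  assumes fin: "\<And>t. finite (A t)"
  shows "multilin f (map (\<lambda>t. \<Sum>a\<in>A t. Poly_Mapping.single (g t a) (1::'k::field_char_0)) ts)
    = (\<Sum>as\<in>listset (map A ts). Poly_Mapping.single (f (map2 g ts as)) 1)"
  unfolding multilin_def using multilin_gen[OF fin, where c=1 and f=f and ts=ts] by simp

lemma listset_unit: "listset (map (\<lambda>t. {()}) ts) = {replicate (length ts) ()}"
  by (induction ts) (auto simp: set_Cons_def)

lemma vee_single:
  assumes "2 \<le> length ts"
  shows "vee (map (\<lambda>t. Poly_Mapping.single (Some t) (1::'k::field_char_0)) ts) = Poly_Mapping.single (Some (Node ts)) 1"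
proof -
  have "vee (map (\<lambda>t. Poly_Mapping.single (Some t) (1::'k)) ts)
      = multilin graft (map (\<lambda>t. \<Sum>a\<in>{()}. Poly_Mapping.single ((\<lambda>t a. Some t) t a) (1::'k)) ts)"
    by (simp add: vee_def)
  also have "\<dots> = Poly_Mapping.single (graft (map2 (\<lambda>t a. Some t) ts (replicate (length ts) ()))) 1"
    by (subst multilin_sum) (auto simp: listset_unit)
  also have "map2 (\<lambda>t a. Some t) ts (replicate (length ts) ()) = map Some ts"
    by (induction ts) auto
  also have "[t. Some t \<leftarrow> map Some ts] = ts" by (induction ts) auto
  hence "graft (map Some ts) = Some (Node ts)"
    using assms unfolding graft_def
    by (cases ts rule: remdups_adj.cases) auto
  finally show ?thesis by simp
qed

lemma finite_leaves: fixes t :: "'x tree" and ts :: "'x tree list"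
  shows "finite (leaves t)" "finite (leavess i ts)"
  by (induction t and i ts rule: leaves_leavess.induct) auto

lemma mem_leavess: "(k#p \<in> leavess i ts) = (i \<le> k \<and> k < i + length ts \<and> p \<in> leaves (ts!(k-i)))"
proof (induction ts arbitrary: i)
  case Nil then show ?case by simp
next
  case (Cons t ts)
  show ?case
  proof (cases "k = i")
    case True then show ?thesis using Cons by auto
  next
    case False
    have "k#p \<in> leavess i (t#ts) \<longleftrightarrow> k#p \<in> leavess (Suc i) ts" using False by auto
    also have "\<dots> \<longleftrightarrow> Suc i \<le> k \<and> k < Suc i + length ts \<and> p \<in> leaves (ts!(k - Suc i))" by (rule Cons.IH)
    also have "\<dots> \<longleftrightarrow> i \<le> k \<and> k < i + length (t#ts) \<and> p \<in> leaves ((t#ts)!(k-i))"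
    proof (cases "i < k")
      case True
      then have "(t#ts)!(k-i) = ts!(k-Suc i)" by (metis Suc_diff_Suc nth_Cons_Suc)
      then show ?thesis using True by auto
    next
      case False2: False
      then show ?thesis using False by auto
    qed
    finally show ?thesis .
  qed
qed

lemma leavess_nonempty: "q \<in> leavess i ts \<Longrightarrow> \<exists>k p. q = k#p"
  by (induction ts arbitrary: i) auto

definition parts :: "nat list set \<Rightarrow> nat \<Rightarrow> nat \<Rightarrow> nat list set list" where
  "parts I i n = map (\<lambda>k. {p. k#p \<in> I}) [i..<i+n]"

lemma parts_Suc: "parts I i (Suc n) = {p. i#p \<in> I} # parts I (Suc i) n"
proof -
  have "[i..<i+Suc n] = i # [Suc i..<Suc i+n]" by (simp add: upt_conv_Cons del: upt_Suc)
  then show ?thesis unfolding parts_def by simp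
qed

lemma reindex_parts:
  "(\<Sum>Js\<in>listset (map (\<lambda>t. Pow (leaves t)) ts). H Js)
    = (\<Sum>I\<in>Pow (leavess i ts). H (parts I i (length ts)))"
proof (induction ts arbitrary: i H)
  case Nil then show ?case by (simp add: parts_def)
next
  case (Cons t ts)
  let ?B = "leavess (Suc i) ts"
  have nB: "i#p \<notin> ?B" for p by (simp add: mem_leavess)
  have finL: "finite (listset (map (\<lambda>t. Pow (leaves t)) ts))"
    by (intro finite_listset) (auto simp: finite_leaves)
  have "(\<Sum>Js\<in>listset (map (\<lambda>t. Pow (leaves t)) (t#ts)). H Js)
      = (\<Sum>J\<in>Pow (leaves t). \<Sum>Js\<in>listset (map (\<lambda>t. Pow (leaves t)) ts). H (J#Js))"
    by (simp only: list.map listset.simps, subst sum_set_Cons) (auto simp: finL finite_leaves)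
  also have "\<dots> = (\<Sum>J\<in>Pow (leaves t). \<Sum>K\<in>Pow ?B. H (J # parts K (Suc i) (length ts)))"
    using Cons.IH[of _ "Suc i"] by simp
  also have "\<dots> = (\<Sum>(J,K)\<in>Pow (leaves t) \<times> Pow ?B. H (J # parts K (Suc i) (length ts)))"
    by (simp add: sum.cartesian_product)
  also have "\<dots> = (\<Sum>I\<in>Pow (leavess i (t#ts)). H (parts I i (length (t#ts))))"
  proof (rule sum.reindex_bij_witness[where i="\<lambda>I. ({p. i#p \<in> I}, I \<inter> ?B)"
        and j="\<lambda>(J,K). Cons i ` J \<union> K"])
    fix I assume I: "I \<in> Pow (leavess i (t#ts))"
    show "(case ({p. i#p \<in> I}, I \<inter> ?B) of (J,K) \<Rightarrow> Cons i ` J \<union> K) = I"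
      using I by auto
    show "({p. i#p \<in> I}, I \<inter> ?B) \<in> Pow (leaves t) \<times> Pow ?B"
      using I nB by auto
  next
    fix JK assume JK: "JK \<in> Pow (leaves t) \<times> Pow ?B"
    obtain J K where e: "JK = (J,K)" by force
    have K: "K \<subseteq> ?B" using JK e by auto
    show "({p. i#p \<in> (case JK of (J,K) \<Rightarrow> Cons i ` J \<union> K)}, (case JK of (J,K) \<Rightarrow> Cons i ` J \<union> K) \<inter> ?B) = JK"
      using K nB unfolding e by auto
    show "(case JK of (J,K) \<Rightarrow> Cons i ` J \<union> K) \<in> Pow (leavess i (t#ts))"
      using JK e by auto
    have "parts (Cons i ` J \<union> K) (Suc i) (length ts) = parts K (Suc i) (length ts)"
      unfolding parts_def
    proof (rule map_cong[OF refl])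
      fix k assume "k \<in> set [Suc i..<Suc i + length ts]"
      then have "k \<noteq> i" by auto
      then show "{p. k#p \<in> Cons i ` J \<union> K} = {p. k#p \<in> K}" by auto
    qed
    moreover have "{p. i#p \<in> Cons i ` J \<union> K} = J" using K nB by auto
    ultimately have "parts (Cons i ` J \<union> K) i (length (t#ts)) = J # parts K (Suc i) (length ts)"
      by (simp add: parts_Suc)
    then show "H (parts (case JK of (J,K) \<Rightarrow> Cons i ` J \<union> K) i (length (t#ts)))
        = (case JK of (J,K) \<Rightarrow> H (J # parts K (Suc i) (length ts)))" unfolding e by simp
  qed
  finally show ?case .
qed


lemma parts_0: "parts I i 0 = []" by (simp add: parts_def)

lemma restrs_parts: "restrs I i ts = [t'. Some t' \<leftarrow> map2 restr (parts I i (length ts)) ts]"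
  by (induction ts arbitrary: i) (simp_all add: parts_Suc parts_0 split: option.split)

lemma filt_map_option: "[t. Some t \<leftarrow> map (map_option f) rs] = map f [t. Some t \<leftarrow> rs]"
  by (induction rs) (auto split: option.split)

definition mk :: "'x tree list \<Rightarrow> 'x tree option" where
  "mk L = (case L of [] \<Rightarrow> None | [t] \<Rightarrow> Some t | _ \<Rightarrow> Some (Node L))"

lemma graft_mk: "graft ms = mk [t. Some t \<leftarrow> ms]"
  unfolding graft_def mk_def Let_def ..

lemma red_case: "red_m (case L of [] \<Rightarrow> None | ts' \<Rightarrow> Some (Node ts')) = mk (map red L)"
  by (cases L rule: remdups_adj.cases) (auto simp: red_m_def mk_def)

lemma red_restr_node:
  "red_m (restr I (Node ts)) = graft (map2 (\<lambda>J t. red_m (restr J t)) (parts I 0 (length ts)) ts)"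
proof -
  have e: "map2 (\<lambda>J t. red_m (restr J t)) (parts I 0 (length ts)) ts
      = map (map_option red) (map2 restr (parts I 0 (length ts)) ts)"
    by (simp add: red_m_def case_prod_beta)
  show ?thesis
    unfolding restr.simps restrs_parts red_case graft_mk e filt_map_option ..
qed


lemma length_parts[simp]: "length (parts I i n) = n"
  by (simp add: parts_def)

lemma parts_nth: "k < n \<Longrightarrow> parts I 0 n ! k = {p. k#p \<in> I}"
  by (simp add: parts_def)

lemma coprod_leaf: "coprod_formula (Some t) =
   (\<Sum>J\<in>Pow (leaves t). Poly_Mapping.single (red_m (restr J t), red_m (restr (leaves t - J) t)) 1)"
  by (simp add: coprod_formula_def leaves_m_def restr_m_def)

lemma coprod_node:
  fixes ts :: "'x tree list"
  shows "coprod_formula (Some (Node ts)) = (vee_t (map (\<lambda>t. coprod_formula (Some t)) ts) :: _ \<Rightarrow>\<^sub>0 'k::field_char_0)"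
proof -
  define G where "G = (\<lambda>(t::'x tree) J. (red_m (restr J t), red_m (restr (leaves t - J) t)))"
  define Fp where "Fp = (\<lambda>ps::('x mon \<times> 'x mon) list. (graft (map fst ps), graft (map snd ps)))"
  define L where "L = leavess 0 ts"
  define n where "n = length ts"
  have "vee_t (map (\<lambda>t. coprod_formula (Some t)) ts)
      = multilin Fp (map (\<lambda>t. \<Sum>J\<in>Pow (leaves t). Poly_Mapping.single (G t J) (1::'k)) ts)"
    unfolding vee_t_def Fp_def G_def coprod_leaf ..
  also have "\<dots> = (\<Sum>Js\<in>listset (map (\<lambda>t. Pow (leaves t)) ts). Poly_Mapping.single (Fp (map2 G ts Js)) 1)"
    by (rule multilin_sum) (simp add: finite_leaves)
  also have "\<dots> = (\<Sum>I\<in>Pow L. Poly_Mapping.single (Fp (map2 G ts (parts I 0 n))) 1)"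
    unfolding L_def n_def by (rule reindex_parts)
  also have "\<dots> = (\<Sum>I\<in>Pow L. Poly_Mapping.single (red_m (restr I (Node ts)), red_m (restr (L - I) (Node ts))) 1)"
  proof (rule sum.cong[OF refl])
    fix I assume I: "I \<in> Pow L"
    have a: "map fst (map2 G ts (parts I 0 n)) = map2 (\<lambda>J t. red_m (restr J t)) (parts I 0 n) ts"
      by (rule nth_equalityI) (auto simp: parts_def G_def n_def)
    have "leaves (ts!k) - {p. k#p \<in> I} = {p. k#p \<in> L - I}" if "k < n" for k
      using that I by (auto simp: L_def n_def mem_leavess)
    then have b: "map snd (map2 G ts (parts I 0 n)) = map2 (\<lambda>J t. red_m (restr J t)) (parts (L - I) 0 n) ts"
      by (intro nth_equalityI) (auto simp: parts_nth G_def n_def simp del: set_diff_eq)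
    show "Poly_Mapping.single (Fp (map2 G ts (parts I 0 n))) 1
        = Poly_Mapping.single (red_m (restr I (Node ts)), red_m (restr (L - I) (Node ts))) (1::'k)"
      unfolding Fp_def a b red_restr_node[of _ ts, folded n_def] ..
  qed
  also have "\<dots> = coprod_formula (Some (Node ts))"
    by (simp add: coprod_formula_def leaves_m_def restr_m_def L_def)
  finally show ?thesis by simp
qed


lemma coprod_Leaf: "coprod_formula (Some (Leaf x)) = (prim_t x :: _ \<Rightarrow>\<^sub>0 'k::field_char_0)"
proof -
  have "Pow {[]::nat list} = {{}, {[]}}" by auto
  then show ?thesis
    by (simp add: coprod_leaf prim_t_def red_m_def add.commute)
qed

lemma main_tree:
  fixes D :: "('x mon \<Rightarrow>\<^sub>0 'k::field_char_0) \<Rightarrow> (('x mon \<times> 'x mon) \<Rightarrow>\<^sub>0 'k)"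
  assumes var: "\<And>x. D (var_v x) = prim_t x"
    and nodeP: "\<And>ts. P (Node ts) \<Longrightarrow> 2 \<le> length ts \<and> (\<forall>t\<in>set ts. P t)"
    and hom: "\<And>ts. P (Node ts) \<Longrightarrow>
        D (vee (map (\<lambda>t. Poly_Mapping.single (Some t) 1) ts)) = vee_t (map (\<lambda>t. D (Poly_Mapping.single (Some t) 1)) ts)"
  shows "P t \<Longrightarrow> D (Poly_Mapping.single (Some t) 1) = coprod_formula (Some t)"
proof (induction t)
  case (Leaf x)
  then show ?case using var[of x] by (simp add: var_v_def coprod_Leaf)
next
  case (Node ts)
  have l: "2 \<le> length ts" and P: "\<forall>t\<in>set ts. P t" using nodeP[OF Node.prems] by auto
  have "D (Poly_Mapping.single (Some (Node ts)) 1) = D (vee (map (\<lambda>t. Poly_Mapping.single (Some t) 1) ts))"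
    by (simp add: vee_single[OF l])
  also have "\<dots> = vee_t (map (\<lambda>t. D (Poly_Mapping.single (Some t) 1)) ts)"
    by (rule hom[OF Node.prems])
  also have "map (\<lambda>t. D (Poly_Mapping.single (Some t) 1)) ts = map (\<lambda>t. coprod_formula (Some t)) ts"
    using Node.IH P by auto
  finally show ?case by (simp add: coprod_node)
qed

theorem proposition4p3p5:
  fixes D :: "('x::countable mon \<Rightarrow>\<^sub>0 'k::field_char_0) \<Rightarrow> (('x mon \<times> 'x mon) \<Rightarrow>\<^sub>0 'k)"
    and D' :: "('x mon \<Rightarrow>\<^sub>0 'k) \<Rightarrow> (('x mon \<times> 'x mon) \<Rightarrow>\<^sub>0 'k)"
  shows "(is_Delta_inf D \<longrightarrow>
            (\<forall>T. is_mon_inf T \<longrightarrow> D (Poly_Mapping.single T 1) = coprod_formula T))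
       \<and> (is_Delta_bin D' \<longrightarrow>
            (\<forall>T. is_mon_bin T \<longrightarrow> D' (Poly_Mapping.single T 1) = coprod_formula T))"
proof (intro conjI impI allI)
  have cN: "coprod_formula (None :: 'x mon) = (one_t :: _ \<Rightarrow>\<^sub>0 'k)"
    by (simp add: coprod_formula_def leaves_m_def restr_m_def red_m_def one_t_def)
  fix T :: "'x mon"
  {
    assume H: "is_Delta_inf D" and T: "is_mon_inf T"
    show "D (Poly_Mapping.single T 1) = coprod_formula T"
    proof (cases T)
      case None
      then show ?thesis using H cN by (simp add: is_Delta_inf_def one_v_def)
    next
      case (Some t)
      have "reduced t" using T Some by (simp add: is_mon_inf_def)
      have "D (Poly_Mapping.single (Some t) 1) = coprod_formula (Some t)"
      proof (rule main_tree[where P=reduced])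
        show "D (var_v x) = prim_t x" for x using H by (simp add: is_Delta_inf_def)
        show "reduced (Node ts) \<Longrightarrow> 2 \<le> length ts \<and> (\<forall>t\<in>set ts. reduced t)" for ts by simp
        show "D (vee (map (\<lambda>t. Poly_Mapping.single (Some t) 1) ts)) = vee_t (map (\<lambda>t. D (Poly_Mapping.single (Some t) 1)) ts)"
          if "reduced (Node ts)" for ts
        proof -
          have "set (map (\<lambda>t. Poly_Mapping.single (Some t) (1::'k)) ts) \<subseteq> Kinf"
            using that by (auto simp: Kinf_def is_mon_inf_def)
          then show ?thesis using H that by (auto simp: is_Delta_inf_def comp_def)
        qed
      qed fact
      then show ?thesis using Some by simp
    qed
  }
  {
    assume H: "is_Delta_bin D'" and T: "is_mon_bin T"
    show "D' (Poly_Mapping.single T 1) = coprod_formula T"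
    proof (cases T)
      case None
      then show ?thesis using H cN by (simp add: is_Delta_bin_def one_v_def)
    next
      case (Some t)
      have "binary t" using T Some by (simp add: is_mon_bin_def)
      have "D' (Poly_Mapping.single (Some t) 1) = coprod_formula (Some t)"
      proof (rule main_tree[where P=binary])
        show "D' (var_v x) = prim_t x" for x using H by (simp add: is_Delta_bin_def)
        show "binary (Node ts) \<Longrightarrow> 2 \<le> length ts \<and> (\<forall>t\<in>set ts. binary t)" for ts by simp
        show "D' (vee (map (\<lambda>t. Poly_Mapping.single (Some t) 1) ts)) = vee_t (map (\<lambda>t. D' (Poly_Mapping.single (Some t) 1)) ts)"
          if bt: "binary (Node ts)" for ts
        proof -
          obtain a b where ab: "ts = [a, b]" "binary a" "binary b" using bt
            by (cases ts rule: remdups_adj.cases) auto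
          have "Poly_Mapping.single (Some a) (1::'k) \<in> Kbin" "Poly_Mapping.single (Some b) (1::'k) \<in> Kbin"
            using ab by (auto simp: Kbin_def is_mon_bin_def)
          then show ?thesis using H ab by (auto simp: is_Delta_bin_def)
        qed
      qed fact
      then show ?thesis using Some by simp
    qed
  }
qed

end
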